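(* Let $p\ge5$ be prime and $f$ a modular form of weight $k$ on $\mathrm{SL}_2(\mathbb{Z})$ with integer Fourier coefficients. Then $D^{p^2}f$ is a modular form mod $p^2$; that is, the image of $D^{p^2}f\in\mathbb{Z}_{(p)}[P,Q,R]$ in $(\mathbb{Z}/p^2\mathbb{Z})[P,Q,R]$ lies in $(\mathbb{Z}/p^2\mathbb{Z})[Q,R]$.
   Context: $\mathbb{Z}_{(p)}$ is the localization of $\mathbb{Z}$ at $p$. $P=E_2,Q=E_4,R=E_6$ are the normalized Eisenstein series; quasimodular forms are identified with their unique polynomial expressions in $P,Q,R$, so $f\in\mathbb{Z}_{(p)}[Q,R]$. $D=q\frac{d}{dq}$ acts on $\mathbb{Z}_{(p)}[P,Q,R]$ as the derivation with $DP=\frac{P^2-Q}{12}$, $DQ=\frac{PQ-R}{3}$, $DR=\frac{PR-Q^2}{2}$. *)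

theory Defs
  imports "HOL-Computational_Algebra.Computational_Algebra"
begin

text \<open>Polynomials in P, Q, R over the rationals, represented as nested univariate
  polynomials: the outer variable is R, the middle one Q, the inner one P.
  The coefficient of P^a Q^b R^c in f is coeff (coeff (coeff f c) b) a.\<close>

type_synonym pqr = "rat poly poly poly"

definition varP :: pqr where "varP = [:[:[:0, 1:]:]:]"
definition varQ :: pqr where "varQ = [:[:0, 1:]:]"
definition varR :: pqr where "varR = [:0, 1:]"
definition cst :: "rat \<Rightarrow> pqr" where "cst r = [:[:[:r:]:]:]"

definition coeffPQR :: "pqr \<Rightarrow> nat \<Rightarrow> nat \<Rightarrow> nat \<Rightarrow> rat" where
  "coeffPQR f a b c = coeff (coeff (coeff f c) b) a"

definition dP :: "pqr \<Rightarrow> pqr" where "dP f = map_poly (map_poly pderiv) f"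
definition dQ :: "pqr \<Rightarrow> pqr" where "dQ f = map_poly pderiv f"
definition dR :: "pqr \<Rightarrow> pqr" where "dR f = pderiv f"

text \<open>The Ramanujan derivation D = q d/dq on polynomials in P, Q, R.\<close>
definition Dop :: "pqr \<Rightarrow> pqr" where
  "Dop f = cst (1/12) * (varP^2 - varQ) * dP f
         + cst (1/3) * (varP * varQ - varR) * dQ f
         + cst (1/2) * (varP * varR - varQ^2) * dR f"

definition in_Zp :: "nat \<Rightarrow> rat \<Rightarrow> bool" where
  "in_Zp p r \<longleftrightarrow> coprime (int p) (snd (quotient_of r))"

definition sigma :: "nat \<Rightarrow> nat \<Rightarrow> nat" where
  "sigma j n = (\<Sum>d | d dvd n. d ^ j)"

definition E2q :: "rat fps" where
  "E2q = Abs_fps (\<lambda>n. if n = 0 then 1 else - 24 * of_nat (sigma 1 n))"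
definition E4q :: "rat fps" where
  "E4q = Abs_fps (\<lambda>n. if n = 0 then 1 else 240 * of_nat (sigma 3 n))"
definition E6q :: "rat fps" where
  "E6q = Abs_fps (\<lambda>n. if n = 0 then 1 else - 504 * of_nat (sigma 5 n))"

definition qexp :: "pqr \<Rightarrow> rat fps" where
  "qexp f = poly (map_poly (\<lambda>g. poly (map_poly (\<lambda>h. poly (map_poly fps_const h) E2q) g) E4q) f) E6q"

text \<open>A modular form of weight k on SL2(Z), identified with its (isobaric) polynomial in Q, R.\<close>
definition modular_form :: "nat \<Rightarrow> pqr \<Rightarrow> bool" where
  "modular_form k f \<longleftrightarrow>
     (\<forall>a b c. coeffPQR f a b c \<noteq> 0 \<longrightarrow> a = 0 \<and> 4 * b + 6 * c = k)"

definition integral_fourier :: "pqr \<Rightarrow> bool" where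
  "integral_fourier f \<longleftrightarrow> (\<forall>n. fps_nth (qexp f) n \<in> \<int>)"

text \<open>g lies in Z_(p)[P,Q,R] and its reduction mod p^2 lies in (Z/p^2Z)[Q,R].\<close>
definition modform_mod_p2 :: "nat \<Rightarrow> pqr \<Rightarrow> bool" where
  "modform_mod_p2 p g \<longleftrightarrow>
     (\<forall>a b c. in_Zp p (coeffPQR g a b c)) \<and>
     (\<forall>a b c. a > 0 \<longrightarrow> in_Zp p (coeffPQR g a b c / of_nat (p ^ 2)))"

end

theory Submission
  imports Defs
begin

definition zp :: "nat \<Rightarrow> rat \<Rightarrow> bool" where
  "zp p r \<longleftrightarrow> (\<exists>a b. b \<noteq> 0 \<and> coprime (int p) b \<and> r = of_int a / of_int b)"

lemma in_Zp_zp: "in_Zp p r \<longleftrightarrow> zp p r"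
proof
  assume "in_Zp p r"
  obtain a b where q: "quotient_of r = (a, b)" by (cases "quotient_of r")
  then show "zp p r" using \<open>in_Zp p r\<close> quotient_of_div[OF q] quotient_of_denom_pos[OF q]
    unfolding in_Zp_def zp_def by (intro exI[of _ a] exI[of _ b]) auto
next
  assume "zp p r"
  then obtain a b where cb: "coprime (int p) b" and r: "r = of_int a / of_int b" and "b \<noteq> 0"
    unfolding zp_def by auto
  obtain a' b' where q: "quotient_of r = (a', b')" by (cases "quotient_of r")
  have r': "r = of_int a' / of_int b'" using quotient_of_div[OF q] .
  have bp: "b' > 0" using quotient_of_denom_pos[OF q] .
  have cop: "coprime a' b'" using quotient_of_coprime[OF q] .
  show "in_Zp p r"
  proof (cases "b = 0")
    case True
    then have "r = 0" using r by simp
    then have "a' = 0" using r' bp by simp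
    then have "b' = 1" using cop bp by simp
    then show ?thesis using q unfolding in_Zp_def by simp
  next
    case False
    have "of_int a' * of_int b = (of_int a * of_int b' :: rat)"
      using r r' False bp by (simp add: field_simps)
    then have e: "a' * b = a * b'" by (metis of_int_eq_iff of_int_mult)
    have "b' dvd a' * b" using e by simp
    then have "b' dvd b" using cop by (metis coprime_commute coprime_dvd_mult_right_iff)
    then obtain t where "b = b' * t" by (auto elim: dvdE)
    then have "coprime (int p) b'" using cb by simp
    then show ?thesis using q unfolding in_Zp_def by simp
  qed
qed

lemma zp_int: "zp p (of_int n)"
  unfolding zp_def by (rule exI[of _ n], rule exI[of _ 1]) simp

lemma zp_nat: "zp p (of_nat n)"
  using zp_int[of p "int n"] by simp

lemma zp_0 [simp]: "zp p 0" using zp_int[of p 0] by simp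
lemma zp_1 [simp]: "zp p 1" using zp_int[of p 1] by simp

lemma zp_add: "zp p r \<Longrightarrow> zp p s \<Longrightarrow> zp p (r + s)"
proof -
  assume "zp p r" "zp p s"
  then obtain a b c d where h: "b \<noteq> 0" "coprime (int p) b" "r = of_int a / of_int b"
      "d \<noteq> 0" "coprime (int p) d" "s = of_int c / of_int d" unfolding zp_def by blast
  have "r + s = of_int (a*d + c*b) / of_int (b*d)" using h by (simp add: field_simps)
  moreover have "b * d \<noteq> 0" "coprime (int p) (b*d)" using h by auto
  ultimately show ?thesis unfolding zp_def by blast
qed

lemma zp_mult: "zp p r \<Longrightarrow> zp p s \<Longrightarrow> zp p (r * s)"
proof -
  assume "zp p r" "zp p s"
  then obtain a b c d where h: "b \<noteq> 0" "coprime (int p) b" "r = of_int a / of_int b"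
      "d \<noteq> 0" "coprime (int p) d" "s = of_int c / of_int d" unfolding zp_def by blast
  have "r * s = of_int (a*c) / of_int (b*d)" using h by simp
  moreover have "b * d \<noteq> 0" "coprime (int p) (b*d)" using h by auto
  ultimately show ?thesis unfolding zp_def by blast
qed

lemma zp_uminus: "zp p r \<Longrightarrow> zp p (- r)"
proof -
  assume "zp p r"
  then have "zp p (of_int (-1) * r)" by (rule zp_mult[OF zp_int])
  then show ?thesis by simp
qed

lemma zp_diff: "zp p r \<Longrightarrow> zp p s \<Longrightarrow> zp p (r - s)"
  unfolding diff_conv_add_uminus by (rule zp_add, assumption, rule zp_uminus)

lemma zp_inv: "b \<noteq> 0 \<Longrightarrow> coprime (int p) b \<Longrightarrow> zp p (1 / of_int b)"
  unfolding zp_def by (intro exI[of _ 1] exI[of _ b]) simp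

lemma zp_power: "zp p r \<Longrightarrow> zp p (r ^ n)"
  by (induction n) (auto intro: zp_mult)

lemma zp_sum: "(\<And>i. i \<in> A \<Longrightarrow> zp p (f i)) \<Longrightarrow> zp p (\<Sum>i\<in>A. f i)"
  by (induction A rule: infinite_finite_induct) (auto intro: zp_add)

lemma zp_prod: "(\<And>i. i \<in> A \<Longrightarrow> zp p (f i)) \<Longrightarrow> zp p (\<Prod>i\<in>A. f i)"
  by (induction A rule: infinite_finite_induct) (auto intro: zp_mult)

lemma zp_Ints: "r \<in> \<int> \<Longrightarrow> zp p r"
  by (auto elim: Ints_cases intro: zp_int)

lemma coprime_small:
  assumes "prime p" "p \<ge> 5"
  shows "coprime (int p) (2^i * 3^j)"
proof -
  have pi: "prime (int p)" using assms by simp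
  have "\<not> int p dvd 2" using assms(2) by (auto dest: zdvd_imp_le)
  moreover have "\<not> int p dvd 3" using assms(2) by (auto dest: zdvd_imp_le)
  ultimately have "coprime (int p) 2" "coprime (int p) 3"
    using pi prime_imp_coprime by blast+
  then show ?thesis by simp
qed

lemma zp_inv_small:
  assumes "prime p" "p \<ge> 5"
  shows "zp p (1 / (2^i * 3^j))"
  using zp_inv[OF _ coprime_small[OF assms, of i j]] by simp

lemma coeffPQR_eqI: "(\<And>a b c. coeffPQR F a b c = coeffPQR G a b c) \<Longrightarrow> F = G"
  unfolding coeffPQR_def by (intro poly_eqI) blast

lemma cPQR_add [simp]: "coeffPQR (F + G) a b c = coeffPQR F a b c + coeffPQR G a b c"
  by (simp add: coeffPQR_def)
lemma cPQR_diff [simp]: "coeffPQR (F - G) a b c = coeffPQR F a b c - coeffPQR G a b c"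
  by (simp add: coeffPQR_def)
lemma cPQR_uminus [simp]: "coeffPQR (- F) a b c = - coeffPQR F a b c"
  by (simp add: coeffPQR_def)
lemma cPQR_0 [simp]: "coeffPQR 0 a b c = 0"
  by (simp add: coeffPQR_def)
lemma cPQR_cst [simp]: "coeffPQR (cst r * F) a b c = r * coeffPQR F a b c"
  by (simp add: coeffPQR_def cst_def)
lemma cPQR_cst_r [simp]: "coeffPQR (F * cst r) a b c = r * coeffPQR F a b c"
  by (simp add: coeffPQR_def cst_def)
lemma cPQR_cst' [simp]: "coeffPQR (cst r) a b c = (if a = 0 \<and> b = 0 \<and> c = 0 then r else 0)"
  by (simp add: coeffPQR_def cst_def coeff_pCons')
lemma cPQR_varP [simp]: "coeffPQR (varP * F) a b c = (if a = 0 then 0 else coeffPQR F (a-1) b c)"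
  by (simp add: coeffPQR_def varP_def coeff_pCons')
lemma cPQR_varQ [simp]: "coeffPQR (varQ * F) a b c = (if b = 0 then 0 else coeffPQR F a (b-1) c)"
  by (simp add: coeffPQR_def varQ_def coeff_pCons')
lemma cPQR_varR [simp]: "coeffPQR (varR * F) a b c = (if c = 0 then 0 else coeffPQR F a b (c-1))"
  by (simp add: coeffPQR_def varR_def coeff_pCons')
lemma cPQR_dP [simp]: "coeffPQR (dP F) a b c = of_nat (Suc a) * coeffPQR F (Suc a) b c"
  by (simp add: coeffPQR_def dP_def coeff_map_poly coeff_pderiv)
lemma cPQR_dQ [simp]: "coeffPQR (dQ F) a b c = of_nat (Suc b) * coeffPQR F a (Suc b) c"
  by (simp add: coeffPQR_def dQ_def coeff_map_poly coeff_pderiv of_nat_poly)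
lemma cPQR_dR [simp]: "coeffPQR (dR F) a b c = of_nat (Suc c) * coeffPQR F a b (Suc c)"
  by (simp add: coeffPQR_def dR_def coeff_pderiv of_nat_poly)

lemma Dop_expand: "Dop F = cst (1/12) * (varP * (varP * dP F)) - cst (1/12) * (varQ * dP F)
   + cst (1/3) * (varP * (varQ * dQ F)) - cst (1/3) * (varR * dQ F)
   + cst (1/2) * (varP * (varR * dR F)) - cst (1/2) * (varQ * (varQ * dR F))"
  unfolding Dop_def power2_eq_square by (simp add: algebra_simps)

definition Wop :: "pqr \<Rightarrow> pqr" where
  "Wop F = cst 2 * (varP * dP F) + cst 4 * (varQ * dQ F) + cst 6 * (varR * dR F)"

lemma cPQR_Wop: "coeffPQR (Wop F) a b c = of_nat (2*a+4*b+6*c) * coeffPQR F a b c"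
  unfolding Wop_def by (cases a; cases b; cases c) (simp_all add: ring_distribs)

lemma commut: "dP (Dop F) = Dop (dP F) + cst (1/12) * Wop F"
proof (rule coeffPQR_eqI)
  fix a b c
  show "coeffPQR (dP (Dop F)) a b c = coeffPQR (Dop (dP F) + cst (1/12) * Wop F) a b c"
    unfolding cPQR_add cPQR_cst cPQR_Wop cPQR_dP Dop_expand
    apply (cases a; cases b; cases c)
    apply (simp_all add: ring_distribs)
    apply (auto simp: field_simps)
    done
qed

lemma Dop_cst: "Dop (cst r * F) = cst r * Dop F"
  by (rule coeffPQR_eqI) (simp add: Dop_expand; simp add: algebra_simps)

lemma Dop_0 [simp]: "Dop 0 = 0"
  by (rule coeffPQR_eqI) (simp add: Dop_expand)

lemma dP_cst: "dP (cst r * F) = cst r * dP F"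
  by (rule coeffPQR_eqI) simp

lemma cst_cst: "cst r * (cst s * G) = cst (r * s) * G"
  by (rule coeffPQR_eqI) simp
lemma cst_add: "cst r * G + cst s * G = cst (r + s) * G"
  by (rule coeffPQR_eqI) (simp add: algebra_simps)
lemma cst_zero: "cst 0 * G = 0"
  by (rule coeffPQR_eqI) simp

definition iso :: "nat \<Rightarrow> pqr \<Rightarrow> bool" where
  "iso w F \<longleftrightarrow> (\<forall>a b c. coeffPQR F a b c \<noteq> 0 \<longrightarrow> 2*a+4*b+6*c = w)"

lemma iso_D: "iso w F \<Longrightarrow> 2*a+4*b+6*c \<noteq> w \<Longrightarrow> coeffPQR F a b c = 0"
  unfolding iso_def by blast

lemma iso_Dop: assumes "iso w F" shows "iso (w+2) (Dop F)"
  unfolding iso_def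
proof (intro allI impI, rule ccontr)
  fix a b c
  assume nz: "coeffPQR (Dop F) a b c \<noteq> 0" and ne: "2*a+4*b+6*c \<noteq> w+2"
  have z: "\<And>a b c. 2*a+4*b+6*c \<noteq> w \<Longrightarrow> coeffPQR F a b c = 0" using iso_D[OF assms] .
  have "coeffPQR (Dop F) a b c = 0"
    using ne unfolding Dop_expand
    by (cases a; cases b; cases c) (simp_all add: z)
  then show False using nz by simp
qed

lemma iso_Wop: assumes "iso w F" shows "Wop F = cst (of_nat w) * F"
proof (rule coeffPQR_eqI)
  fix a b c
  show "coeffPQR (Wop F) a b c = coeffPQR (cst (of_nat w) * F) a b c"
  proof (cases "coeffPQR F a b c = 0")
    case True
    then show ?thesis by (simp add: cPQR_Wop)
  next
    case False
    then have "2*a+4*b+6*c = w" using assms unfolding iso_def by blast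
    then show ?thesis by (simp only: cPQR_Wop cPQR_cst)
  qed
qed

lemma iso_cst: "iso w F \<Longrightarrow> iso w (cst r * F)"
  unfolding iso_def by simp

lemma Dop_pow_iso: "iso k f \<Longrightarrow> iso (k + 2*m) ((Dop^^m) f)"
  by (induction m) (simp_all add: iso_Dop[where w="k+2*_", simplified])

lemma dP_Dop_pow:
  assumes "dP f = 0" "iso k f"
  shows "dP ((Dop^^m) f) = cst (of_nat m * (of_nat k + of_nat m - 1)/12) * (Dop^^(m-1)) f"
proof (induction m)
  case 0
  then show ?case using assms by (simp add: cst_zero)
next
  case (Suc m)
  have W: "Wop ((Dop^^m) f) = cst (of_nat (k + 2*m)) * (Dop^^m) f"
    using iso_Wop[OF Dop_pow_iso[OF assms(2)]] .
  have "dP ((Dop^^Suc m) f) = Dop (dP ((Dop^^m) f)) + cst (1/12) * Wop ((Dop^^m) f)"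
    by (simp add: commut)
  also have "\<dots> = Dop (cst (of_nat m * (of_nat k + of_nat m - 1)/12) * (Dop^^(m-1)) f)
      + cst (1/12) * (cst (of_nat (k + 2*m)) * (Dop^^m) f)"
    by (simp only: Suc W)
  also have "\<dots> = cst (of_nat (Suc m) * (of_nat k + of_nat (Suc m) - 1)/12) * (Dop^^(Suc m - 1)) f"
  proof (cases m)
    case 0
    then show ?thesis by (simp add: cst_zero cst_cst)
  next
    case (Suc m')
    define c1 :: rat where "c1 = of_nat m * (of_nat k + of_nat m - 1)/12"
    have e1: "Dop (cst c1 * (Dop^^(m-1)) f) = cst c1 * (Dop^^m) f"
      using Suc by (simp add: Dop_cst)
    have e2: "c1 + 1/12 * of_nat (k + 2*m) = of_nat (Suc m) * (of_nat k + of_nat (Suc m) - 1)/12"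
      unfolding c1_def by (simp add: field_simps)
    show ?thesis unfolding c1_def[symmetric] e1 cst_cst cst_add e2 by simp
  qed
  finally show ?case .
qed

lemma dP_iter:
  assumes "dP f = 0" "iso k f"
  shows "(dP^^j) ((Dop^^n) f) =
    cst (\<Prod>i<j. of_nat (n-i) * (of_nat k + of_nat (n-i) - 1)/12) * (Dop^^(n-j)) f"
proof (induction j)
  case 0
  then show ?case by (rule coeffPQR_eqI) simp
next
  case (Suc j)
  have "(dP^^Suc j) ((Dop^^n) f) = dP ((dP^^j) ((Dop^^n) f))" by simp
  also have "\<dots> = cst (\<Prod>i<j. of_nat (n-i) * (of_nat k + of_nat (n-i) - 1)/12) *
       dP ((Dop^^(n-j)) f)" by (simp only: Suc dP_cst)
  also have "\<dots> = cst (\<Prod>i<Suc j. of_nat (n-i) * (of_nat k + of_nat (n-i) - 1)/12) *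
       (Dop^^(n - Suc j)) f"
    using dP_Dop_pow[OF assms, of "n-j"] by (simp add: cst_cst prod.lessThan_Suc)
  finally show ?case .
qed

lemma cPQR_dP_iter:
  "coeffPQR ((dP^^j) F) a b c = (\<Prod>i<j. of_nat (a+1+i)) * coeffPQR F (a+j) b c"
proof (induction j arbitrary: a F)
  case 0
  then show ?case by simp
next
  case (Suc j)
  have "(dP^^Suc j) F = (dP^^j) (dP F)" by (simp add: funpow_Suc_right del: funpow.simps)
  then show ?case using Suc by (simp add: prod.lessThan_Suc algebra_simps)
qed

definition zpf :: "nat \<Rightarrow> rat fps \<Rightarrow> bool" where
  "zpf p F \<longleftrightarrow> (\<forall>n. zp p (F $ n))"

lemma zpf_add: "zpf p F \<Longrightarrow> zpf p G \<Longrightarrow> zpf p (F + G)"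
  unfolding zpf_def by (simp add: zp_add)
lemma zpf_diff: "zpf p F \<Longrightarrow> zpf p G \<Longrightarrow> zpf p (F - G)"
  unfolding zpf_def by (simp add: zp_diff)
lemma zpf_mult: "zpf p F \<Longrightarrow> zpf p G \<Longrightarrow> zpf p (F * G)"
  unfolding zpf_def fps_mult_nth by (auto intro!: zp_sum zp_mult)
lemma zpf_const: "zp p r \<Longrightarrow> zpf p (fps_const r)"
  unfolding zpf_def by (simp add: fps_nth_fps_const)
lemma zpf_1: "zpf p 1"
  using zpf_const[of p 1] by simp
lemma zpf_power: "zpf p F \<Longrightarrow> zpf p (F ^ n)"
  by (induction n) (auto intro: zpf_mult zpf_1)

lemma div_unit:
  assumes w0: "w $ 0 = 1" and zw: "zpf p w" and zwG: "zpf p (w * G)"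
  shows "zpf p G"
  unfolding zpf_def
proof (intro allI)
  fix n show "zp p (G $ n)"
  proof (induction n rule: less_induct)
    case (less n)
    have "(w * G) $ n = (\<Sum>i=0..n. w $ i * G $ (n - i))" by (rule fps_mult_nth)
    also have "\<dots> = w $ 0 * G $ n + (\<Sum>i=Suc 0..n. w $ i * G $ (n - i))"
      by (simp add: sum.atLeast_Suc_atMost)
    finally have eq: "G $ n = (w * G) $ n - (\<Sum>i=Suc 0..n. w $ i * G $ (n - i))"
      using w0 by simp
    have s: "zp p (\<Sum>i=Suc 0..n. w $ i * G $ (n - i))"
      by (rule zp_sum) (use zw less in \<open>auto simp: zpf_def intro!: zp_mult\<close>)
    have "zp p ((w * G) $ n)" using zwG unfolding zpf_def by blast
    then show ?case unfolding eq using s by (rule zp_diff)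
  qed
qed

lemma div_shift:
  assumes u0: "u $ 0 = 0" and u1: "zp p (1 / u $ 1)" "u $ 1 \<noteq> 0"
    and zu: "zpf p u" and zuG: "zpf p (u * G)"
  shows "zpf p G"
  unfolding zpf_def
proof (intro allI)
  fix n show "zp p (G $ n)"
  proof (induction n rule: less_induct)
    case (less n)
    have "(u * G) $ Suc n = (\<Sum>i=0..Suc n. u $ i * G $ (Suc n - i))" by (rule fps_mult_nth)
    also have "\<dots> = u $ 0 * G $ Suc n + (u $ 1 * G $ n + (\<Sum>i=Suc (Suc 0)..Suc n. u $ i * G $ (Suc n - i)))"
      by (simp add: sum.atLeast_Suc_atMost)
    finally have "G $ n = ((u * G) $ Suc n - (\<Sum>i=Suc (Suc 0)..Suc n. u $ i * G $ (Suc n - i))) * (1 / u $ 1)"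
      using u0 u1 by (simp add: field_simps)
    then have eq: "G $ n = ((u * G) $ Suc n - (\<Sum>i=Suc (Suc 0)..Suc n. u $ i * G $ (Suc n - i))) * (1 / u $ 1)" .
    have s: "zp p (\<Sum>i=Suc (Suc 0)..Suc n. u $ i * G $ (Suc n - i))"
      by (rule zp_sum) (use zu less in \<open>auto simp: zpf_def intro!: zp_mult\<close>)
    have "zp p ((u * G) $ Suc n)" using zuG unfolding zpf_def by blast
    then show ?case unfolding eq using s u1(1) by (intro zp_mult zp_diff)
  qed
qed

definition E :: "rat poly \<Rightarrow> rat fps \<Rightarrow> rat fps" where
  "E g z = poly (map_poly fps_const g) z"

lemma fps_const_sum: "fps_const (\<Sum>i\<in>A. f i) = (\<Sum>i\<in>A. fps_const (f i))"
  by (induction A rule: infinite_finite_induct) (simp_all flip: fps_const_add)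

lemma map_fps_const_add: "map_poly fps_const (p + q) = map_poly fps_const p + map_poly fps_const q"
  by (intro poly_eqI) (simp add: coeff_map_poly flip: fps_const_add)

lemma map_fps_const_mult: "map_poly fps_const (p * q) = map_poly fps_const p * map_poly fps_const q"
  by (intro poly_eqI) (simp add: coeff_map_poly coeff_mult fps_const_sum)

lemma E_add: "E (p + q) z = E p z + E q z"
  by (simp add: E_def map_fps_const_add)
lemma E_mult: "E (p * q) z = E p z * E q z"
  by (simp add: E_def map_fps_const_mult)
lemma E_pCons: "E (pCons a p) z = fps_const a + z * E p z"
  by (simp add: E_def map_poly_pCons)
lemma E_const: "E [:a:] z = fps_const a"
  using E_pCons[of a 0 z] by (simp add: E_def)
lemma E_0: "E 0 z = 0"
  by (simp add: E_def)
lemma E_pcompose: "E (pcompose h q) z = E h (E q z)"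
  by (induction h) (simp_all add: pcompose_pCons E_add E_mult E_pCons E_const E_0)
lemma E_monom: "E (monom a i) z = fps_const a * z ^ i"
  by (simp add: E_def map_poly_monom poly_monom)
lemma E_sum: "E (\<Sum>i\<in>A. f i) z = (\<Sum>i\<in>A. E (f i) z)"
  by (induction A rule: infinite_finite_induct) (simp_all add: E_add E_0)

definition zpc :: "nat \<Rightarrow> rat poly \<Rightarrow> bool" where
  "zpc p g \<longleftrightarrow> (\<forall>i. zp p (coeff g i))"

lemma zpc_add: "zpc p g \<Longrightarrow> zpc p h \<Longrightarrow> zpc p (g + h)"
  unfolding zpc_def by (simp add: zp_add)
lemma zpc_mult: "zpc p g \<Longrightarrow> zpc p h \<Longrightarrow> zpc p (g * h)"
  unfolding zpc_def coeff_mult by (auto intro!: zp_sum zp_mult)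
lemma zpc_const: "zp p a \<Longrightarrow> zpc p [:a:]"
  unfolding zpc_def by (simp add: coeff_pCons')
lemma zpc_pcompose: "zpc p g \<Longrightarrow> zpc p q \<Longrightarrow> zpc p (pcompose g q)"
proof (induction g)
  case 0
  then show ?case by (simp add: zpc_def)
next
  case (pCons a g)
  have "zp p a" "zpc p g" using pCons.prems(1) unfolding zpc_def
    by (metis coeff_pCons_0, metis coeff_pCons_Suc)
  then show ?case unfolding pcompose_pCons
    using pCons by (intro zpc_add zpc_mult zpc_const) auto
qed

lemma lemmaT:
  assumes u0: "u $ 0 = 0" and u1: "zp p (1 / u $ 1)" "u $ 1 \<noteq> 0" and zu: "zpf p u"
  shows "zpf p (E g u) \<Longrightarrow> zpc p g"
proof (induction g)
  case 0
  then show ?case by (simp add: zpc_def)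
next
  case (pCons a g)
  have e: "E (pCons a g) u = fps_const a + u * E g u" by (rule E_pCons)
  have "(E (pCons a g) u) $ 0 = a" unfolding e by (simp add: u0)
  then have a: "zp p a"
    using pCons.prems unfolding zpf_def by metis
  have "zpf p (u * E g u)"
  proof -
    have "u * E g u = E (pCons a g) u - fps_const a" using e by simp
    then show ?thesis using pCons.prems zpf_diff zpf_const[OF a] by metis
  qed
  then have "zpf p (E g u)" by (rule div_shift[OF u0 u1 zu])
  then have "zpc p g" by (rule pCons.IH)
  then show ?case using a unfolding zpc_def by (simp add: coeff_pCons')
qed

lemma arith1:
  fixes k b0 c0' b c :: nat
  assumes ex: "4*b0+6*c0'= k" and defs: "K = k div 2" "c0 = K mod 2" "B = (K - 3*c0) div 2" "d = B div 3"
  shows "4*b+6*c = k \<longleftrightarrow> (\<exists>i\<le>d. b = B - 3*i \<and> c = c0 + 2*i)"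
proof -
  have K0: "K = c0' + (b0 + c0')*2" using ex defs(1) by simp
  have c0m: "c0 = c0' mod 2" by (simp only: defs(2) K0 mod_mult_self1)
  have K: "K = c0' + 2*(b0 + c0')" using K0 by simp
  have k2: "k = 2*K" using ex K0 by simp
  define q where "q = c0' div 2"
  have c': "c0' = c0 + 2*q" using c0m unfolding q_def by simp
  have K3: "K = 3*c0 + 2*(b0 + 3*q)" using K c' by simp
  then have KB: "K - 3*c0 = 2*(b0 + 3*q)" by simp
  have B2: "2*B = K - 3*c0" using KB defs(3) by simp
  have Bge: "3*c0 \<le> K" using K3 by simp
  show ?thesis
  proof
    assume h: "4*b+6*c = k"
    have Kb0: "K = c + (b + c)*2" using h defs(1) by simp
    have cm: "c mod 2 = c0" by (simp only: defs(2) Kb0 mod_mult_self1)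
    have Kb: "K = c + 2*(b + c)" using Kb0 by simp
    define i where "i = c div 2"
    have ci: "c = c0 + 2*i" using cm[symmetric] unfolding i_def by simp
    have "2*B = 2*b + 6*i" using B2 Kb ci by simp
    then have bi: "B = b + 3*i" by simp
    then have "i \<le> d" using defs(4) by (simp add: less_eq_div_iff_mult_less_eq)
    then show "\<exists>i\<le>d. b = B - 3*i \<and> c = c0 + 2*i" using bi ci by auto
  next
    assume "\<exists>i\<le>d. b = B - 3*i \<and> c = c0 + 2*i"
    then obtain i where i: "i \<le> d" "b = B - 3*i" "c = c0 + 2*i" by blast
    have "3*d \<le> B" using defs(4) by simp
    then have "3*i \<le> B" using i(1) by simp
    then have "4*b + 6*c = 4*B + 6*c0" using i by simp
    also have "\<dots> = k" using B2 Bge k2 by arith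
    finally show "4*b+6*c = k" .
  qed
qed

lemma arith2:
  fixes i d B :: nat
  assumes "i \<le> d" "d = B div 3"
  shows "B - 3*i = (B - 3*d) + 3*(d-i)"
proof -
  have "3*d \<le> B" unfolding assms(2) by simp
  then show ?thesis using assms(1) by arith
qed

lemma sigma_1: "sigma j (Suc 0) = Suc 0"
  unfolding sigma_def by simp

lemma E4_0: "E4q $ 0 = 1" by (simp add: E4q_def)
lemma E6_0: "E6q $ 0 = 1" by (simp add: E6q_def)
lemma E4_1: "E4q $ Suc 0 = 240" by (simp add: E4q_def sigma_1)
lemma E6_1: "E6q $ Suc 0 = -504" by (simp add: E6q_def sigma_1)

lemma zpf_E4: "zpf p E4q"
proof -
  have "E4q $ n = of_int (if n = 0 then 1 else 240 * int (sigma 3 n))" for n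
    by (simp add: E4q_def)
  then have "zp p (E4q $ n)" for n by (simp only: zp_int)
  then show ?thesis unfolding zpf_def by blast
qed
lemma zpf_E6: "zpf p E6q"
proof -
  have "E6q $ n = of_int (if n = 0 then 1 else - 504 * int (sigma 5 n))" for n
    by (simp add: E6q_def)
  then have "zp p (E6q $ n)" for n by (simp only: zp_int)
  then show ?thesis unfolding zpf_def by blast
qed

lemma pow_nth1: "(f :: rat fps) $ 0 = 1 \<Longrightarrow> (f ^ n) $ Suc 0 = of_nat n * f $ Suc 0"
proof (induction n)
  case 0 then show ?case by simp
next
  case (Suc n)
  have "(f ^ Suc n) $ Suc 0 = f $ 0 * (f ^ n) $ Suc 0 + f $ Suc 0 * (f ^ n) $ 0"
    by (simp add: fps_mult_nth_1')
  then show ?case using Suc by (simp add: fps_power_zeroth_eq_one algebra_simps)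
qed

definition "Xf = E4q ^ 3"
definition "Yf = E6q ^ 2"
definition "Dl = Xf - Yf"
definition "Xi = inverse Xf"
definition "uf = Dl * Xi"

lemma Xf_0: "Xf $ 0 = 1" by (simp add: Xf_def fps_power_zeroth_eq_one E4_0)
lemma Yf_0: "Yf $ 0 = 1" by (simp add: Yf_def fps_power_zeroth_eq_one E6_0)
lemma Xf_1: "Xf $ Suc 0 = 720" using pow_nth1[OF E4_0, of 3] by (simp add: Xf_def E4_1)
lemma Yf_1: "Yf $ Suc 0 = -1008" using pow_nth1[OF E6_0, of 2] by (simp add: Yf_def E6_1)
lemma Xi_X: "Xi * Xf = 1" unfolding Xi_def by (rule inverse_mult_eq_1) (simp add: Xf_0)
lemma Xi_0: "Xi $ 0 = 1"
proof -
  have "(Xi * Xf) $ 0 = 1" by (simp add: Xi_X)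
  then show ?thesis by (simp add: Xf_0)
qed
lemma zpf_Xf: "zpf p Xf" unfolding Xf_def by (intro zpf_power zpf_E4)
lemma zpf_Yf: "zpf p Yf" unfolding Yf_def by (intro zpf_power zpf_E6)
lemma zpf_Xi: "zpf p Xi"
proof (rule div_unit[OF Xf_0 zpf_Xf])
  have "Xf * Xi = 1" by (metis Xi_X mult.commute)
  then show "zpf p (Xf * Xi)" by (simp add: zpf_1)
qed
lemma uf_0: "uf $ 0 = 0" by (simp add: uf_def Dl_def Xf_0 Yf_0)
lemma uf_1: "uf $ Suc 0 = 1728"
  by (simp add: uf_def fps_mult_nth_1' Dl_def Xf_0 Yf_0 Xf_1 Yf_1 Xi_0)
lemma zpf_uf: "zpf p uf" unfolding uf_def Dl_def by (intro zpf_mult zpf_diff zpf_Xf zpf_Yf zpf_Xi)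
lemma Y_Xi: "Yf * Xi = 1 - uf"
proof -
  have "Yf * Xi = (Xf - Dl) * Xi" by (simp add: Dl_def)
  also have "\<dots> = Xi * Xf - Dl * Xi" by (simp add: algebra_simps)
  also have "\<dots> = 1 - uf" by (simp add: Xi_X uf_def)
  finally show ?thesis .
qed

lemma poly_bound: fixes x :: "'a::comm_ring_1" assumes "degree p \<le> M" shows "poly p x = (\<Sum>i\<le>M. coeff p i * x ^ i)"
proof -
  have "(\<Sum>i\<le>degree p. coeff p i * x^i) = (\<Sum>i\<le>M. coeff p i * x^i)"
    by (rule sum.mono_neutral_left) (use assms in \<open>auto simp: coeff_eq_0\<close>)
  then show ?thesis by (simp add: poly_altdef)
qed

lemma qexp_sum:
  assumes mf: "\<forall>a b c. coeffPQR f a b c \<noteq> 0 \<longrightarrow> a = 0 \<and> 4*b+6*c = k"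
  shows "qexp f = (\<Sum>c\<le>k. \<Sum>b\<le>k. fps_const (coeffPQR f 0 b c) * E4q^b * E6q^c)"
proof -
  define x where "x b c = coeffPQR f 0 b c" for b c
  have h0: "coeff (coeff f c) b = [:x b c:]" for b c
  proof (rule poly_eqI)
    fix a
    show "coeff (coeff (coeff f c) b) a = coeff [:x b c:] a"
      using mf unfolding x_def coeffPQR_def by (cases a) (auto simp: coeff_pCons')
  qed
  have xz: "x b c = 0" if "b > k \<or> c > k" for b c
    using mf that unfolding x_def by force
  have dc: "degree (coeff f c) \<le> k" for c
    by (rule degree_le) (auto simp: h0 xz)
  have df: "degree f \<le> k"
  proof (rule degree_le, intro allI impI)
    fix c assume "k < c"
    show "coeff f c = 0" by (rule poly_eqI) (simp add: h0 xz \<open>k < c\<close>)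
  qed
  define \<psi> where "\<psi> h = poly (map_poly fps_const h) E2q" for h :: "rat poly"
  define \<phi> where "\<phi> g = poly (map_poly \<psi> g) E4q" for g :: "rat poly poly"
  have q: "qexp f = poly (map_poly \<phi> f) E6q"
    unfolding qexp_def \<phi>_def \<psi>_def ..
  have \<psi>0: "\<psi> 0 = 0" by (simp add: \<psi>_def)
  have \<phi>0: "\<phi> 0 = 0" by (simp add: \<phi>_def)
  have \<psi>c: "\<psi> [:r:] = fps_const r" for r using E_const[of r E2q] by (simp add: \<psi>_def E_def)
  have "qexp f = (\<Sum>c\<le>k. coeff (map_poly \<phi> f) c * E6q ^ c)"
    unfolding q by (rule poly_bound) (rule order_trans[OF map_poly_degree_leq df])
  also have "\<dots> = (\<Sum>c\<le>k. \<phi> (coeff f c) * E6q ^ c)"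
    by (simp add: coeff_map_poly \<phi>0)
  also have "\<dots> = (\<Sum>c\<le>k. (\<Sum>b\<le>k. fps_const (x b c) * E4q^b) * E6q ^ c)"
  proof (rule sum.cong[OF refl])
    fix c
    have "\<phi> (coeff f c) = (\<Sum>b\<le>k. coeff (map_poly \<psi> (coeff f c)) b * E4q ^ b)"
      unfolding \<phi>_def by (rule poly_bound) (rule order_trans[OF map_poly_degree_leq dc])
    also have "\<dots> = (\<Sum>b\<le>k. fps_const (x b c) * E4q^b)"
      by (simp add: coeff_map_poly \<psi>0 h0 \<psi>c)
    finally show "\<phi> (coeff f c) * E6q ^ c = (\<Sum>b\<le>k. fps_const (x b c) * E4q^b) * E6q ^ c" by simp
  qed
  finally show ?thesis unfolding x_def by (simp only: sum_distrib_right)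
qed

lemma reindex:
  fixes F :: "nat \<Rightarrow> nat \<Rightarrow> 'a::comm_monoid_add"
  assumes nz: "\<And>b c. F b c \<noteq> 0 \<Longrightarrow> 4*b+6*c = k" and ex: "4*b0+6*c0' = k"
    and defs: "K = k div 2" "c0 = K mod 2" "B = (K - 3*c0) div 2" "d = B div 3"
  shows "(\<Sum>c\<le>k. \<Sum>b\<le>k. F b c) = (\<Sum>i\<le>d. F (B - 3*i) (c0 + 2*i))"
proof -
  have ar: "4*b+6*c = k \<longleftrightarrow> (\<exists>i\<le>d. b = B - 3*i \<and> c = c0 + 2*i)" for b c
    by (rule arith1[OF ex defs])
  define g where "g i = (c0 + 2*i, B - 3*i)" for i
  have inj: "inj_on g {..d}" unfolding g_def by (auto intro: inj_onI)
  have sub: "g ` {..d} \<subseteq> {..k} \<times> {..k}"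
  proof
    fix y assume "y \<in> g ` {..d}"
    then obtain i where i: "i \<le> d" "y = g i" by auto
    then have "4*(B - 3*i) + 6*(c0 + 2*i) = k" using ar by blast
    then show "y \<in> {..k} \<times> {..k}" using i unfolding g_def by auto
  qed
  have "(\<Sum>c\<le>k. \<Sum>b\<le>k. F b c) = (\<Sum>(c,b)\<in>{..k} \<times> {..k}. F b c)"
    by (rule sum.cartesian_product)
  also have "\<dots> = (\<Sum>(c,b)\<in>g ` {..d}. F b c)"
  proof (rule sum.mono_neutral_right[OF _ sub])
    show "finite ({..k} \<times> {..k})" by simp
    show "\<forall>y\<in>{..k} \<times> {..k} - g ` {..d}. (case y of (c, b) \<Rightarrow> F b c) = 0"
    proof (clarify)
      fix c b assume "(c, b) \<notin> g ` {..d}"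
      then have "\<not> (\<exists>i\<le>d. b = B - 3*i \<and> c = c0 + 2*i)" unfolding g_def by force
      then show "F b c = 0" using nz ar by blast
    qed
  qed
  also have "\<dots> = (\<Sum>i\<le>d. F (B - 3*i) (c0 + 2*i))"
    by (subst sum.reindex[OF inj]) (simp add: g_def)
  finally show ?thesis .
qed

lemma term_rw:
  assumes "i \<le> d" "d = B div 3"
  shows "fps_const x * E4q^(B-3*i) * E6q^(c0+2*i) = (E4q^(B-3*d) * E6q^c0 * Xf^d) * (fps_const x * (Yf*Xi)^i)"
proof -
  have e1: "E4q^(B-3*i) = E4q^(B-3*d) * Xf^(d-i)"
    by (simp add: arith2[OF assms] power_add power_mult Xf_def)
  have e2: "E6q^(c0+2*i) = E6q^c0 * Yf^i"
    by (simp add: power_add power_mult Yf_def)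
  have e3: "Xf^d = Xf^(d-i) * Xf^i"
    using assms(1) by (simp flip: power_add)
  have e4: "Xf^i * Xi^i = 1" by (metis Xi_X mult.commute power_mult_distrib power_one)
  have "(E4q^(B-3*d) * E6q^c0 * Xf^d) * (fps_const x * (Yf*Xi)^i)
      = (fps_const x * (E4q^(B-3*d) * Xf^(d-i)) * (E6q^c0 * Yf^i)) * (Xf^i * Xi^i)"
    unfolding e3 power_mult_distrib by (simp add: mult_ac)
  also have "\<dots> = fps_const x * E4q^(B-3*i) * E6q^(c0+2*i)"
    unfolding e4 e1 e2 by simp
  finally have e: "(E4q^(B-3*d) * E6q^c0 * Xf^d) * (fps_const x * (Yf*Xi)^i) = fps_const x * E4q^(B-3*i) * E6q^(c0+2*i)" .
  show ?thesis using e by (rule sym)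
qed

lemma zpc_lin: "zpc p [:1, -1:]"
  unfolding zpc_def by (auto simp: coeff_pCons' intro: zp_uminus split: nat.splits)

lemma E_lin: "E [:1, -1:] z = 1 - z"
proof -
  have m: "z * fps_const (-1::rat) = -z"
    by (metis fps_const_neg fps_const_1_eq_1 mult.right_neutral mult_minus_right)
  show ?thesis by (simp add: E_pCons E_0 m)
qed

lemma lin_lin: "pcompose [:1, -1:] [:(1::rat), -1:] = [:0, 1:]"
  by (simp add: pcompose_pCons)

lemma L2:
  assumes pp: "prime p" "p \<ge> 5"
    and mf: "\<forall>a b c. coeffPQR f a b c \<noteq> 0 \<longrightarrow> a = 0 \<and> 4*b+6*c = k"
    and intf: "integral_fourier f"
  shows "zp p (coeffPQR f a b c)"
proof (cases "coeffPQR f a b c = 0")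
  case True
  then show ?thesis by simp
next
  case False
  then have a0: "a = 0" and ex: "4*b+6*c = k" using mf by auto
  define K where "K = k div 2"
  define c0 where "c0 = K mod 2"
  define B where "B = (K - 3*c0) div 2"
  define d where "d = B div 3"
  define h where "h i = coeffPQR f 0 (B - 3*i) (c0 + 2*i)" for i
  define Wt where "Wt = E4q^(B-3*d) * E6q^c0 * Xf^d"
  define hp where "hp = (\<Sum>i\<le>d. monom (h i) i)"
  define F where "F b c = fps_const (coeffPQR f 0 b c) * E4q^b * E6q^c" for b c
  have ar: "4*b'+6*c' = k \<longleftrightarrow> (\<exists>i\<le>d. b' = B - 3*i \<and> c' = c0 + 2*i)" for b' c'
    by (rule arith1[OF ex K_def c0_def B_def d_def])
  have Fnz: "F b' c' \<noteq> 0 \<Longrightarrow> 4*b'+6*c' = k" for b' c'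
    using mf unfolding F_def by fastforce
  have "qexp f = (\<Sum>c\<le>k. \<Sum>b\<le>k. F b c)"
    unfolding F_def by (rule qexp_sum[OF mf])
  also have "\<dots> = (\<Sum>i\<le>d. F (B - 3*i) (c0 + 2*i))"
    by (rule reindex[OF Fnz ex K_def c0_def B_def d_def])
  also have "\<dots> = (\<Sum>i\<le>d. Wt * (fps_const (h i) * (Yf*Xi)^i))"
    unfolding F_def h_def Wt_def by (rule sum.cong[OF refl]) (rule term_rw[OF _ d_def], simp)
  also have "\<dots> = Wt * E hp (1 - uf)"
    unfolding hp_def E_sum E_monom Y_Xi by (simp add: sum_distrib_left)
  finally have q: "qexp f = Wt * E hp (1 - uf)" .
  have zq: "zpf p (qexp f)"
    using intf unfolding integral_fourier_def zpf_def by (auto intro: zp_Ints)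
  have W0: "Wt $ 0 = 1"
    by (simp add: Wt_def fps_power_zeroth E4_0 E6_0 Xf_0)
  have zW: "zpf p Wt"
    unfolding Wt_def by (intro zpf_mult zpf_power zpf_E4 zpf_E6 zpf_Xf)
  have "zpf p (E hp (1 - uf))"
    by (rule div_unit[OF W0 zW]) (use zq q in simp)
  moreover have "E hp (1 - uf) = E (pcompose hp [:1, -1:]) uf"
    by (simp add: E_pcompose E_lin)
  ultimately have "zpf p (E (pcompose hp [:1, -1:]) uf)" by simp
  moreover have u1: "zp p (1 / uf $ 1)"
    using zp_inv_small[OF pp, of 6 3] uf_1 by simp
  ultimately have "zpc p (pcompose hp [:1, -1:])"
    using lemmaT[OF uf_0 u1 _ zpf_uf] uf_1 by simp
  then have "zpc p (pcompose (pcompose hp [:1, -1:]) [:1, -1:])"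
    by (rule zpc_pcompose[OF _ zpc_lin])
  then have zhp: "zpc p hp"
    by (simp flip: pcompose_assoc add: lin_lin)
  obtain i where i: "i \<le> d" "b = B - 3*i" "c = c0 + 2*i" using ar ex by blast
  have "coeff hp i = h i"
    unfolding hp_def coeff_sum coeff_monom using i(1) by simp
  then have "zp p (h i)" using zhp unfolding zpc_def by metis
  then show ?thesis using i a0 unfolding h_def by simp
qed

definition zpP :: "nat \<Rightarrow> pqr \<Rightarrow> bool" where
  "zpP p F \<longleftrightarrow> (\<forall>a b c. zp p (coeffPQR F a b c))"

lemma zpP_add: "zpP p F \<Longrightarrow> zpP p G \<Longrightarrow> zpP p (F + G)"
  unfolding zpP_def by (simp add: zp_add)
lemma zpP_diff: "zpP p F \<Longrightarrow> zpP p G \<Longrightarrow> zpP p (F - G)"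
  unfolding zpP_def by (simp add: zp_diff)
lemma zpP_cst: "zp p r \<Longrightarrow> zpP p F \<Longrightarrow> zpP p (cst r * F)"
  unfolding zpP_def by (simp add: zp_mult)
lemma zpP_varP: "zpP p F \<Longrightarrow> zpP p (varP * F)"
  unfolding zpP_def by simp
lemma zpP_varQ: "zpP p F \<Longrightarrow> zpP p (varQ * F)"
  unfolding zpP_def by simp
lemma zpP_varR: "zpP p F \<Longrightarrow> zpP p (varR * F)"
  unfolding zpP_def by simp
lemma zpP_dP: "zpP p F \<Longrightarrow> zpP p (dP F)"
  unfolding zpP_def by (simp del: of_nat_Suc add: zp_mult zp_nat)
lemma zpP_dQ: "zpP p F \<Longrightarrow> zpP p (dQ F)"
  unfolding zpP_def by (simp del: of_nat_Suc add: zp_mult zp_nat)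
lemma zpP_dR: "zpP p F \<Longrightarrow> zpP p (dR F)"
  unfolding zpP_def by (simp del: of_nat_Suc add: zp_mult zp_nat)

lemma zpP_Dop:
  assumes pp: "prime p" "p \<ge> 5" and z: "zpP p F"
  shows "zpP p (Dop F)"
proof -
  have z12: "zp p (1/12)" using zp_inv_small[OF pp, of 2 1] by simp
  have z3: "zp p (1/3)" using zp_inv_small[OF pp, of 0 1] by simp
  have z2: "zp p (1/2)" using zp_inv_small[OF pp, of 1 0] by simp
  show ?thesis unfolding Dop_expand
    by (intro zpP_add zpP_diff zpP_cst zpP_varP zpP_varQ zpP_varR zpP_dP zpP_dQ zpP_dR z z12 z3 z2)
qed

lemma zpP_Dop_pow: "prime p \<Longrightarrow> p \<ge> 5 \<Longrightarrow> zpP p f \<Longrightarrow> zpP p ((Dop^^m) f)"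
  by (induction m) (simp_all add: zpP_Dop)

lemma prod_fact: "(\<Prod>i<a. of_nat (0 + 1 + i) :: rat) = fact a"
  by (induction a) (simp_all add: prod.lessThan_Suc algebra_simps)

lemma coeff_scalar:
  fixes N k a :: nat
  assumes a: "0 < a" "a \<le> N"
  shows "(\<Prod>i<a. of_nat (N-i) * (of_nat k + of_nat (N-i) - 1)/12 :: rat)
     = of_nat N * ((\<Prod>i<a - 1. of_nat (N - Suc i)) * of_nat ((k+N-1) choose a) * (1/12)^a) * fact a"
proof -
  obtain a' where a': "a = Suc a'" using a(1) by (cases a) auto
  have "(\<Prod>i<a. of_nat (N-i) * (of_nat k + of_nat (N-i) - 1)/12 :: rat)
      = (\<Prod>i<a. of_nat (N-i) * (of_nat k + of_nat (N-i) - 1) * (1/12 :: rat))"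
    by (rule prod.cong[OF refl]) simp
  also have "\<dots> = (\<Prod>i<a. of_nat (N-i)) * (\<Prod>i<a. (of_nat k + of_nat (N-i) - 1 :: rat)) * (\<Prod>i<a. (1/12::rat))"
    by (simp only: prod.distrib)
  also have "(\<Prod>i<a. (1/12::rat)) = (1/12)^a" by simp
  also have "(\<Prod>i<a. (of_nat k + of_nat (N-i) - 1 :: rat)) = (\<Prod>i=0..<a. of_nat (k+N-1) - of_nat i)"
    unfolding atLeast0LessThan
  proof (rule prod.cong[OF refl])
    fix i assume "i \<in> {..<a}"
    then have "i < a" by simp
    then show "(of_nat k + of_nat (N-i) - 1 :: rat) = of_nat (k+N-1) - of_nat i"
      using a by (simp add: of_nat_diff)
  qed
  also have "\<dots> = fact a * of_nat ((k+N-1) choose a)"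
    by (simp add: gbinomial_mult_fact[symmetric] binomial_gbinomial)
  also have "(\<Prod>i<a. of_nat (N-i) :: rat) = of_nat N * (\<Prod>i<a - 1. of_nat (N - Suc i))"
    unfolding a' by (simp only: prod.lessThan_Suc_shift) simp
  finally show ?thesis by (simp add: algebra_simps)
qed

theorem lemma3p10:
  fixes p k :: nat and f :: pqr
  assumes "prime p" and "p \<ge> 5"
    and "modular_form k f" and "integral_fourier f"
  shows "modform_mod_p2 p ((Dop ^^ (p ^ 2)) f)"
proof -
  define N where "N = p^2"
  have pp: "prime p" "p \<ge> 5" by fact+
  have mf: "\<forall>a b c. coeffPQR f a b c \<noteq> 0 \<longrightarrow> a = 0 \<and> 4*b+6*c = k"
    using assms(3) unfolding modular_form_def .
  have df: "dP f = 0"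
    by (rule coeffPQR_eqI) (use mf in auto)
  have isf: "iso k f"
    unfolding iso_def
  proof (intro allI impI)
    fix a b c assume "coeffPQR f a b c \<noteq> 0"
    then have "a = 0 \<and> 4*b+6*c = k" using mf by blast
    then show "2*a+4*b+6*c = k" by simp
  qed
  have zf: "zpP p f"
    unfolding zpP_def using L2[OF pp mf assms(4)] by blast
  have zD: "zpP p ((Dop^^m) f)" for m by (rule zpP_Dop_pow[OF pp zf])
  have Npos: "N > 0" unfolding N_def using pp by simp
  have part2: "zp p (coeffPQR ((Dop^^N) f) a b c / of_nat N)" if "a > 0" for a b c
  proof -
    define C where "C = (\<Prod>i<a. of_nat (N-i) * (of_nat k + of_nat (N-i) - 1)/12 :: rat)"
    define Y where "Y = coeffPQR ((Dop^^(N-a)) f) 0 b c"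
    have zY: "zp p Y" using zD unfolding Y_def zpP_def by blast
    have "coeffPQR ((dP^^a) ((Dop^^N) f)) 0 b c = fact a * coeffPQR ((Dop^^N) f) a b c"
      using cPQR_dP_iter[of a "(Dop^^N) f" 0 b c] by (simp only: prod_fact) simp
    moreover have "coeffPQR ((dP^^a) ((Dop^^N) f)) 0 b c = C * Y"
      unfolding dP_iter[OF df isf] C_def Y_def by simp
    ultimately have co: "coeffPQR ((Dop^^N) f) a b c = C * Y / fact a"
      by (simp add: field_simps)
    show ?thesis
    proof (cases "a \<le> N")
      case True
      define P1 where "P1 = (\<Prod>i<a - 1. of_nat (N - Suc i) :: rat)"
      define Q where "Q = P1 * of_nat ((k+N-1) choose a) * (1/12::rat)^a"
      have Ceq: "C = of_nat N * Q * fact a"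
        unfolding C_def P1_def Q_def by (rule coeff_scalar[OF that True])
      have fa: "(fact a :: rat) \<noteq> 0" by simp
      have Nn: "(of_nat N :: rat) \<noteq> 0" using Npos by simp
      have "coeffPQR ((Dop^^N) f) a b c / of_nat N = (of_nat N * Q * fact a) * Y / fact a / of_nat N"
        using co Ceq by simp
      also have "\<dots> = Q * Y" using fa Nn by simp
      finally have "coeffPQR ((Dop^^N) f) a b c / of_nat N = P1 * of_nat ((k+N-1) choose a) * (1/12)^a * Y"
        unfolding Q_def .
      moreover have "zp p P1" unfolding P1_def by (intro zp_prod zp_nat)
      moreover have "zp p ((1/12)^a)"
        using zp_inv_small[OF pp, of 2 1] by (intro zp_power) simp
      ultimately show ?thesis using zY by (simp add: zp_mult zp_nat)
    next
      case False
      then have "C = 0" unfolding C_def by (intro prod_zero) (auto intro!: bexI[of _ N])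
      then show ?thesis using co by simp
    qed
  qed
  show ?thesis
    unfolding modform_mod_p2_def in_Zp_zp N_def[symmetric]
  proof (intro conjI allI impI)
    fix a b c
    show "zp p (coeffPQR ((Dop ^^ N) f) a b c)" using zD unfolding zpP_def by blast
  next
    fix a b c :: nat assume "a > 0"
    show "zp p (coeffPQR ((Dop ^^ N) f) a b c / of_nat N)"
      using part2[OF \<open>a > 0\<close>] by simp
  qed
qed

end
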